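(* Let $G$ act on a simplicial tree $T$ and let $h\in G$ be hyperbolic. For $\lambda>0$ consider the conditions: $FS(\lambda)$: every element of $G$ fixing a subsegment of $A(h)$ of length greater than $\lambda\,tl(h)$ fixes $A(h)$ pointwise; $AI(\lambda)$: for every hyperbolic $g\in G$ with $tl(g)\le tl(h)$, either $|A(g)\cap A(h)|\le\lambda\,tl(h)$ or $g\in E(h)$; $WS(\lambda)$: $h$ is weakly $\lambda$-stable. Then $FS(\lambda)$ implies both $AI(\lambda+2)$ and $WS(\lambda+2)$, and $WS(\lambda)$ implies $FS(\lambda)$.
   Context: $tl(g)=\inf_p d(p,gp)$; $A(h)$ is the translation axis of hyperbolic $h$; $E(h)$ is the set of elements of $G$ preserving $A(h)$ setwise. $h$ is weakly $\lambda$-stable if for all $g\in G$, $|A(h)\cap gA(h)|>\lambda tl(h)$ implies $g\in E(h)$. *)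

theory Defs
  imports "HOL-Algebra.Group_Action" "HOL-Library.Extended_Real"
begin

text \<open>Simplicial trees: the vertex set is the whole type 'v, adjacency is a relation adj.\<close>

definition walk :: "('v \<Rightarrow> 'v \<Rightarrow> bool) \<Rightarrow> 'v list \<Rightarrow> bool" where
  "walk adj xs \<longleftrightarrow> xs \<noteq> [] \<and> (\<forall>i. Suc i < length xs \<longrightarrow> adj (xs ! i) (xs ! Suc i))"

definition simplicial_tree :: "('v \<Rightarrow> 'v \<Rightarrow> bool) \<Rightarrow> bool" where
  "simplicial_tree adj \<longleftrightarrow>
     (\<forall>u v. adj u v \<longrightarrow> adj v u) \<and> (\<forall>v. \<not> adj v v) \<and>
     (\<forall>u v. \<exists>xs. walk adj xs \<and> hd xs = u \<and> last xs = v) \<and>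
     (\<nexists>xs. walk adj xs \<and> distinct xs \<and> length xs \<ge> 3 \<and> adj (last xs) (hd xs))"

text \<open>Combinatorial (edge-path) distance; it agrees with the metric of the geometric realisation on vertices.\<close>
definition tdist :: "('v \<Rightarrow> 'v \<Rightarrow> bool) \<Rightarrow> 'v \<Rightarrow> 'v \<Rightarrow> nat" where
  "tdist adj u v = (LEAST n. \<exists>xs. walk adj xs \<and> hd xs = u \<and> last xs = v \<and> length xs = Suc n)"

text \<open>An automorphism is hyperbolic iff it fixes no point of the realisation:
  no fixed vertex and no inverted edge.\<close>
definition hyperbolic :: "('v \<Rightarrow> 'v \<Rightarrow> bool) \<Rightarrow> ('v \<Rightarrow> 'v) \<Rightarrow> bool" where
  "hyperbolic adj f \<longleftrightarrow> (\<forall>v. f v \<noteq> v) \<and> (\<nexists>u v. adj u v \<and> f u = v \<and> f v = u)"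

text \<open>Translation length (infimum over vertices; equals the infimum over the realisation
  for hyperbolic elements).\<close>
definition tl :: "('v \<Rightarrow> 'v \<Rightarrow> bool) \<Rightarrow> ('v \<Rightarrow> 'v) \<Rightarrow> nat" where
  "tl adj f = (LEAST n. \<exists>v. tdist adj v (f v) = n)"

definition axis :: "('v \<Rightarrow> 'v \<Rightarrow> bool) \<Rightarrow> ('v \<Rightarrow> 'v) \<Rightarrow> 'v set" where
  "axis adj f = {v. tdist adj v (f v) = tl adj f}"

definition seglen :: "'v set \<Rightarrow> ereal" where
  "seglen S = (if S = {} then 0 else if finite S then ereal (real (card S - 1)) else \<infinity>)"

definition segment :: "('v \<Rightarrow> 'v \<Rightarrow> bool) \<Rightarrow> 'v \<Rightarrow> 'v \<Rightarrow> 'v set" where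
  "segment adj p q = {x. tdist adj p x + tdist adj x q = tdist adj p q}"

definition Eh :: "('g, 'b) monoid_scheme \<Rightarrow> ('g \<Rightarrow> 'v \<Rightarrow> 'v) \<Rightarrow> ('v \<Rightarrow> 'v \<Rightarrow> bool) \<Rightarrow> 'g \<Rightarrow> 'g set" where
  "Eh G phi adj h = {g \<in> carrier G. phi g ` axis adj (phi h) = axis adj (phi h)}"

definition tree_action :: "('g, 'b) monoid_scheme \<Rightarrow> ('g \<Rightarrow> 'v \<Rightarrow> 'v) \<Rightarrow> ('v \<Rightarrow> 'v \<Rightarrow> bool) \<Rightarrow> bool" where
  "tree_action G phi adj \<longleftrightarrow> simplicial_tree adj \<and> group_action G UNIV phi \<and>
     (\<forall>g \<in> carrier G. \<forall>u v. adj (phi g u) (phi g v) \<longleftrightarrow> adj u v)"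

definition FS :: "('g, 'b) monoid_scheme \<Rightarrow> ('g \<Rightarrow> 'v \<Rightarrow> 'v) \<Rightarrow> ('v \<Rightarrow> 'v \<Rightarrow> bool) \<Rightarrow> 'g \<Rightarrow> real \<Rightarrow> bool" where
  "FS G phi adj h lam \<longleftrightarrow> (\<forall>g \<in> carrier G. \<forall>p q.
     p \<in> axis adj (phi h) \<longrightarrow> q \<in> axis adj (phi h) \<longrightarrow>
     real (tdist adj p q) > lam * real (tl adj (phi h)) \<longrightarrow>
     (\<forall>x \<in> segment adj p q. phi g x = x) \<longrightarrow> (\<forall>x \<in> axis adj (phi h). phi g x = x))"

definition AI :: "('g, 'b) monoid_scheme \<Rightarrow> ('g \<Rightarrow> 'v \<Rightarrow> 'v) \<Rightarrow> ('v \<Rightarrow> 'v \<Rightarrow> bool) \<Rightarrow> 'g \<Rightarrow> real \<Rightarrow> bool" where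
  "AI G phi adj h lam \<longleftrightarrow> (\<forall>g \<in> carrier G. hyperbolic adj (phi g) \<longrightarrow>
     tl adj (phi g) \<le> tl adj (phi h) \<longrightarrow>
     seglen (axis adj (phi g) \<inter> axis adj (phi h)) \<le> ereal (lam * real (tl adj (phi h)))
     \<or> g \<in> Eh G phi adj h)"

definition weakly_stable :: "('g, 'b) monoid_scheme \<Rightarrow> ('g \<Rightarrow> 'v \<Rightarrow> 'v) \<Rightarrow> ('v \<Rightarrow> 'v \<Rightarrow> bool) \<Rightarrow> 'g \<Rightarrow> real \<Rightarrow> bool" where
  "weakly_stable G phi adj h lam \<longleftrightarrow> (\<forall>g \<in> carrier G.
     seglen (axis adj (phi h) \<inter> phi g ` axis adj (phi h)) > ereal (lam * real (tl adj (phi h)))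
     \<longrightarrow> g \<in> Eh G phi adj h)"

end

theory Submission
  imports Defs
begin

lemma walk_Cons_iff: "walk adj (x # xs) \<longleftrightarrow> (xs = [] \<or> (walk adj xs \<and> adj x (hd xs)))"
proof (cases xs)
  case Nil then show ?thesis by (simp add: walk_def)
next
  case (Cons y ys)
  have "(\<forall>i. Suc i < length (x#y#ys) \<longrightarrow> adj ((x#y#ys) ! i) ((x#y#ys) ! Suc i)) \<longleftrightarrow>
        adj x y \<and> (\<forall>i. Suc i < length (y#ys) \<longrightarrow> adj ((y#ys) ! i) ((y#ys) ! Suc i))"
    (is "?L \<longleftrightarrow> ?R")
  proof
    assume ?L
    show ?R
    proof
      show "adj x y" using spec[OF \<open>?L\<close>, of 0] by simp
      show "\<forall>i. Suc i < length (y#ys) \<longrightarrow> adj ((y#ys) ! i) ((y#ys) ! Suc i)"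
        using \<open>?L\<close> by (metis Suc_less_eq length_Cons nth_Cons_Suc)
    qed
  next
    assume ?R
    show ?L
    proof (intro allI impI)
      fix i assume "Suc i < length (x#y#ys)"
      then show "adj ((x#y#ys) ! i) ((x#y#ys) ! Suc i)"
        using \<open>?R\<close> by (cases i) auto
    qed
  qed
  then show ?thesis unfolding walk_def Cons list.distinct(1) list.sel(1) simp_thms by blast
qed

lemma walk_append:
  "walk adj xs \<Longrightarrow> walk adj ys \<Longrightarrow> adj (last xs) (hd ys) \<Longrightarrow> walk adj (xs @ ys)"
proof (induction xs)
  case Nil then show ?case by (simp add: walk_def)
next
  case (Cons x xs)
  show ?case
  proof (cases "xs = []")
    case True then show ?thesis using Cons.prems by (simp add: walk_Cons_iff)
  next
    case False
    then have "walk adj xs" "adj x (hd xs)" using Cons.prems by (auto simp: walk_Cons_iff)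
    then have "walk adj (xs @ ys)" using Cons False by simp
    then show ?thesis using False \<open>adj x (hd xs)\<close> by (simp add: walk_Cons_iff)
  qed
qed

lemma walk_ne: "walk adj xs \<Longrightarrow> xs \<noteq> []" by (simp add: walk_def)

lemma walk_take: "walk adj xs \<Longrightarrow> 0 < n \<Longrightarrow> walk adj (take n xs)"
  by (auto simp: walk_def)

lemma walk_drop: "walk adj xs \<Longrightarrow> n < length xs \<Longrightarrow> walk adj (drop n xs)"
  by (auto simp: walk_def)

lemma walk_rev: assumes sym: "\<And>u v. adj u v \<Longrightarrow> adj v u"
  shows "walk adj xs \<Longrightarrow> walk adj (rev xs)"
proof (induction xs)
  case Nil then show ?case by (simp add: walk_def)
next
  case (Cons x xs)
  show ?case
  proof (cases "xs = []")
    case True then show ?thesis by (simp add: walk_def)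
  next
    case False
    then have "walk adj xs" "adj x (hd xs)" using Cons.prems by (auto simp: walk_Cons_iff)
    then have "walk adj (rev xs)" using Cons by simp
    moreover have "walk adj [x]" by (simp add: walk_def)
    ultimately show ?thesis using False \<open>adj x (hd xs)\<close> sym
      by (simp add: walk_append last_rev)
  qed
qed

locale stree =
  fixes adj :: "'v \<Rightarrow> 'v \<Rightarrow> bool"
  assumes st: "simplicial_tree adj"
begin

abbreviation d where "d \<equiv> tdist adj"

lemma adj_sym: "adj u v \<Longrightarrow> adj v u" using st by (simp add: simplicial_tree_def)
lemma adj_irrefl: "\<not> adj v v" using st by (simp add: simplicial_tree_def)
lemma conn: "\<exists>xs. walk adj xs \<and> hd xs = u \<and> last xs = v" using st by (simp add: simplicial_tree_def)
lemma nocyc: "\<not> (walk adj xs \<and> distinct xs \<and> length xs \<ge> 3 \<and> adj (last xs) (hd xs))"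
  using st by (simp add: simplicial_tree_def)

lemma geo_ex: "\<exists>xs. walk adj xs \<and> hd xs = u \<and> last xs = v \<and> length xs = Suc (d u v)"
proof -
  obtain xs where xs: "walk adj xs" "hd xs = u" "last xs = v" using conn by blast
  have "length xs = Suc (length xs - 1)" using walk_ne[OF xs(1)] by (cases xs) auto
  then have "\<exists>n xs. walk adj xs \<and> hd xs = u \<and> last xs = v \<and> length xs = Suc n"
    using xs by blast
  then show ?thesis unfolding tdist_def by (rule LeastI_ex)
qed

lemma dist_le: "walk adj xs \<Longrightarrow> hd xs = u \<Longrightarrow> last xs = v \<Longrightarrow> d u v \<le> length xs - 1"
  unfolding tdist_def
proof (rule Least_le)
  assume "walk adj xs" "hd xs = u" "last xs = v"
  moreover have "length xs = Suc (length xs - 1)" using walk_ne[OF \<open>walk adj xs\<close>] by (cases xs) auto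
  ultimately show "\<exists>xs'. walk adj xs' \<and> hd xs' = u \<and> last xs' = v \<and> length xs' = Suc (length xs - 1)"
    by blast
qed

lemma d_refl[simp]: "d u u = 0"
  using dist_le[of "[u]" u u] by (simp add: walk_def)

lemma d_zero: "d u v = 0 \<Longrightarrow> u = v"
proof -
  assume a: "d u v = 0"
  obtain xs where xs: "walk adj xs" "hd xs = u" "last xs = v" "length xs = Suc (d u v)"
    using geo_ex by blast
  then obtain x where "xs = [x]" using a by (auto simp: length_Suc_conv)
  then show ?thesis using xs by simp
qed

lemma d_zero_iff[simp]: "d u v = 0 \<longleftrightarrow> u = v" using d_zero by auto

lemma d_sym: "d u v = d v u"
proof -
  have *: "d a b \<le> d b a" for a b
  proof -
    obtain xs where "walk adj xs" "hd xs = b" "last xs = a" "length xs = Suc (d b a)"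
      using geo_ex by blast
    moreover have "walk adj (rev xs)" using walk_rev adj_sym \<open>walk adj xs\<close> by blast
    ultimately show ?thesis using dist_le[of "rev xs" a b]
      by (simp add: hd_rev last_rev)
  qed
  show ?thesis using *[of u v] *[of v u] by simp
qed

lemma d_tri: "d u w \<le> d u v + d v w"
proof -
  obtain xs where xs: "walk adj xs" "hd xs = u" "last xs = v" "length xs = Suc (d u v)"
    using geo_ex by blast
  obtain ys where ys: "walk adj ys" "hd ys = v" "last ys = w" "length ys = Suc (d v w)"
    using geo_ex by blast
  show ?thesis
  proof (cases "List.tl ys = []")
    case True
    then have "v = w" using ys by (metis last_ConsL list.exhaust_sel walk_ne)
    then show ?thesis by simp
  next
    case False
    obtain y ys' where yy: "ys = y # ys'" using ys(1) walk_ne by (cases ys) auto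
    then have "walk adj ys'" "adj v (hd ys')" using ys(1,2) False by (auto simp: walk_Cons_iff)
    then have "walk adj (xs @ List.tl ys)" using xs walk_append[of adj xs ys'] yy by simp
    moreover have "hd (xs @ List.tl ys) = u" using xs(2) walk_ne[OF xs(1)] by simp
    moreover have "last (xs @ List.tl ys) = w" using ys False by (simp add: last_tl)
    ultimately have "d u w \<le> length (xs @ List.tl ys) - 1" using dist_le by blast
    then show ?thesis using xs ys by simp
  qed
qed

lemma d_adj: "adj u v \<Longrightarrow> d u v = 1"
proof -
  assume a: "adj u v"
  have "walk adj [u, v]" using a by (simp add: walk_def nth_Cons split: nat.splits)
  then have "d u v \<le> 1" using dist_le[of "[u,v]" u v] by simp
  moreover have "u \<noteq> v" using a adj_irrefl by auto
  ultimately show ?thesis by (cases "d u v") auto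
qed

lemma d_one: "d u v = 1 \<Longrightarrow> adj u v"
proof -
  assume a: "d u v = 1"
  obtain xs where xs: "walk adj xs" "hd xs = u" "last xs = v" "length xs = Suc (d u v)"
    using geo_ex by blast
  then obtain x y where "xs = [x, y]" using a by (auto simp: length_Suc_conv)
  then show ?thesis using xs by (auto simp: walk_Cons_iff)
qed

lemma geo_idx:
  assumes xs: "walk adj xs" "length xs = Suc (d (hd xs) (last xs))" and i: "i < length xs"
  shows "d (hd xs) (xs ! i) = i \<and> d (xs ! i) (last xs) = length xs - 1 - i"
proof -
  have "walk adj (take (Suc i) xs)" using walk_take[OF xs(1)] by simp
  moreover have "last (take (Suc i) xs) = xs ! i" using i
    by (subst last_conv_nth) (auto simp: min_def intro: arg_cong[where f="(!) xs"])
  ultimately have a: "d (hd xs) (xs ! i) \<le> i" using dist_le[of "take (Suc i) xs" "hd xs" "xs ! i"] i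
    by simp
  have "walk adj (drop i xs)" using walk_drop[OF xs(1) i] .
  then have b: "d (xs ! i) (last xs) \<le> length xs - 1 - i" using dist_le[of "drop i xs"] i
    by (simp add: hd_drop_conv_nth)
  have "d (hd xs) (last xs) \<le> d (hd xs) (xs ! i) + d (xs ! i) (last xs)" by (rule d_tri)
  then show ?thesis using a b xs(2) i by linarith
qed

end

context stree
begin

lemma cyc:
  assumes P: "walk adj P" "distinct P" and Q: "walk adj Q" "distinct Q"
    and lst: "last P = last Q" and ab: "adj (hd P) (hd Q)"
    and bP: "hd Q \<notin> set P" and aQ: "hd P \<notin> set Q"
  shows False
proof -
  have Pne: "P \<noteq> []" and Qne: "Q \<noteq> []" using P Q walk_ne by auto
  have ex: "\<exists>j. j < length P \<and> P ! j \<in> set Q"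
    using Pne Qne lst by (metis diff_less last_conv_nth last_in_set length_greater_0_conv zero_less_one)
  define j where "j = (LEAST j. j < length P \<and> P ! j \<in> set Q)"
  have j: "j < length P" "P ! j \<in> set Q" using LeastI_ex[OF ex] unfolding j_def by auto
  have jmin: "i < j \<Longrightarrow> P ! i \<notin> set Q" for i
    using not_less_Least[of i "\<lambda>j. j < length P \<and> P ! j \<in> set Q"] j(1) unfolding j_def by auto
  obtain k where k: "k < length Q" "Q ! k = P ! j" using j(2) by (metis in_set_conv_nth)
  have j0: "j \<noteq> 0" using j aQ Pne by (metis hd_conv_nth)
  have k0: "k \<noteq> 0" using k bP Qne j(1) by (metis hd_conv_nth nth_mem)
  define C where "C = take (Suc j) P @ rev (take k Q)"
  have l1: "last (take (Suc j) P) = P ! j" using j(1)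
    by (subst last_conv_nth) (auto simp: min_def intro: arg_cong[where f="(!) P"])
  have l2: "hd (rev (take k Q)) = Q ! (k - 1)" using k k0
    by (simp add: hd_rev, subst last_conv_nth) (auto simp: min_def)
  have "adj (Q ! (k - 1)) (Q ! k)" using Q(1) k k0 unfolding walk_def
    by (metis Suc_pred' not_gr_zero)
  then have "adj (last (take (Suc j) P)) (hd (rev (take k Q)))" using l1 l2 k adj_sym by simp
  moreover have "walk adj (rev (take k Q))"
    using walk_rev[of adj "take k Q"] adj_sym walk_take[OF Q(1), of k] k0 by blast
  moreover have "walk adj (take (Suc j) P)" using walk_take[OF P(1)] by simp
  ultimately have wC: "walk adj C" unfolding C_def using walk_append by blast
  have disj: "set (take (Suc j) P) \<inter> set (take k Q) = {}"
  proof (rule ccontr)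
    assume "\<not> ?thesis"
    then obtain x where x1: "x \<in> set (take (Suc j) P)" and x2: "x \<in> set (take k Q)" by blast
    from x1 obtain i where i: "i < Suc j" "i < length P" "x = P ! i"
      by (auto simp: in_set_conv_nth)
    from x2 obtain m where m: "m < k" "x = Q ! m"
      by (auto simp: in_set_conv_nth)
    have "x \<in> set Q" using m k by simp
    then have "i = j" using jmin i by (metis less_SucE)
    then have "Q ! m = Q ! k" using m k i by simp
    then show False using Q(2) m k by (metis nth_eq_iff_index_eq order.strict_trans less_irrefl)
  qed
  have dC: "distinct C" unfolding C_def using P(2) Q(2) disj by simp
  have lenC: "length C \<ge> 3" unfolding C_def using j k j0 k0 by (simp add: min_def)
  have "hd C = hd P" unfolding C_def using Pne by simp
  moreover have "last C = hd Q" unfolding C_def using k0 Qne k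
    by (simp add: last_rev)
  ultimately have "adj (last C) (hd C)" using ab adj_sym by simp
  then show False using nocyc[of C] wC dC lenC by simp
qed

lemma geo_distinct:
  assumes xs: "walk adj xs" "length xs = Suc (d (hd xs) (last xs))"
  shows "distinct xs"
  unfolding distinct_conv_nth using geo_idx[OF xs] by metis

lemma geo_in:
  assumes xs: "walk adj xs" "length xs = Suc (d (hd xs) (last xs))" and x: "x \<in> set xs"
  shows "\<exists>i < length xs. x = xs ! i \<and> d x (last xs) = d (hd xs) (last xs) - i"
  using geo_idx[OF xs] x xs(2) by (metis diff_Suc_1 in_set_conv_nth)

lemma bip: assumes "adj u w" shows "d w v \<noteq> d u v"
proof
  assume e: "d w v = d u v"
  obtain P where P: "walk adj P" "hd P = u" "last P = v" "length P = Suc (d u v)" using geo_ex by blast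
  obtain Q where Q: "walk adj Q" "hd Q = w" "last Q = v" "length Q = Suc (d w v)" using geo_ex by blast
  have dP: "distinct P" using geo_distinct P by simp
  have dQ: "distinct Q" using geo_distinct Q by simp
  have "w \<notin> set P"
  proof
    assume "w \<in> set P"
    then obtain i where "i < length P" "w = P ! i" "d w v = d u v - i" using geo_in[of P w] P by auto
    then have "i = 0" using e P(4) by simp
    then show False using \<open>w = P ! i\<close> P(1,2) assms adj_irrefl walk_ne by (metis hd_conv_nth)
  qed
  moreover have "u \<notin> set Q"
  proof
    assume "u \<in> set Q"
    then obtain i where "i < length Q" "u = Q ! i" "d u v = d w v - i" using geo_in[of Q u] Q by auto
    then have "i = 0" using e Q(4) by simp
    then show False using \<open>u = Q ! i\<close> Q(1,2) assms adj_irrefl walk_ne by (metis hd_conv_nth)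
  qed
  ultimately show False using cyc[OF P(1) dP Q(1) dQ] P Q assms by simp
qed

lemma adj_d: assumes "adj u w" shows "d w v = Suc (d u v) \<or> d u v = Suc (d w v)"
proof -
  have "d w v \<le> d w u + d u v" "d u v \<le> d u w + d w v" by (rule d_tri)+
  moreover have "d w u = 1" "d u w = 1" using assms d_adj adj_sym by auto
  ultimately show ?thesis using bip[OF assms, of v] by linarith
qed

lemma step: assumes "d u v = Suc n" shows "\<exists>w. adj u w \<and> d w v = n"
proof -
  obtain P where P: "walk adj P" "hd P = u" "last P = v" "length P = Suc (d u v)" using geo_ex by blast
  have "1 < length P" using P assms by simp
  then have "adj (P ! 0) (P ! 1)" using P(1) unfolding walk_def by simp
  moreover have "d (P ! 1) v = n" using geo_idx[OF P(1), of 1] P assms by simp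
  ultimately show ?thesis using P(1,2) walk_ne by (metis hd_conv_nth)
qed

lemma uniq:
  assumes a1: "adj u w1" and a2: "adj u w2" and duv: "d u v = Suc n"
    and e1: "d w1 v = n" and e2: "d w2 v = n"
  shows "w1 = w2"
proof (rule ccontr)
  assume ne: "w1 \<noteq> w2"
  obtain P1 where P: "walk adj P1" "hd P1 = w1" "last P1 = v" "length P1 = Suc (d w1 v)" using geo_ex by blast
  obtain Q where Q: "walk adj Q" "hd Q = w2" "last Q = v" "length Q = Suc (d w2 v)" using geo_ex by blast
  have dP: "distinct P1" using geo_distinct P by simp
  have dQ: "distinct Q" using geo_distinct Q by simp
  have uP: "u \<notin> set P1"
  proof
    assume "u \<in> set P1"
    then obtain i where "d u v = d w1 v - i" using geo_in[of P1 u] P by auto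
    then show False using duv e1 by simp
  qed
  have uQ: "u \<notin> set Q"
  proof
    assume "u \<in> set Q"
    then obtain i where "d u v = d w2 v - i" using geo_in[of Q u] Q by auto
    then show False using duv e2 by simp
  qed
  have w2P: "w2 \<notin> set P1"
  proof
    assume "w2 \<in> set P1"
    then obtain i where "i < length P1" "w2 = P1 ! i" "d w2 v = d w1 v - i" using geo_in[of P1 w2] P by auto
    then have "i = 0" using e1 e2 P(4) by simp
    then show False using \<open>w2 = P1 ! i\<close> P(1,2) ne walk_ne by (metis hd_conv_nth)
  qed
  have "walk adj (u # P1)" using P(1,2) a1 walk_ne[OF P(1)] by (simp add: walk_Cons_iff)
  moreover have "distinct (u # P1)" using dP uP by simp
  moreover have "w2 \<noteq> u" using a2 adj_irrefl by auto
  ultimately show False using cyc[of "u # P1" Q] Q dQ uQ w2P P(1,3) walk_ne[OF P(1)] a2 by simp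
qed

end

context stree
begin

lemma closer: "adj u w \<Longrightarrow> d w v < d u v \<Longrightarrow> d u v = Suc (d w v)"
  using adj_d[of u w v] by auto

lemma uniq': "adj u w1 \<Longrightarrow> adj u w2 \<Longrightarrow> d w1 v < d u v \<Longrightarrow> d w2 v < d u v \<Longrightarrow> w1 = w2"
proof -
  assume a: "adj u w1" "adj u w2" "d w1 v < d u v" "d w2 v < d u v"
  have "d u v = Suc (d w1 v)" "d u v = Suc (d w2 v)" using closer a by auto
  then show ?thesis using uniq[OF a(1,2), of v "d w1 v"] by simp
qed

lemma glue:
  assumes "d a b = m" "d b c = n" "\<And>w. adj b w \<Longrightarrow> d w a < m \<Longrightarrow> d w c < n \<Longrightarrow> False"
  shows "d a c = m + n"
  using assms
proof (induction n arbitrary: b m)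
  case 0 then show ?case by simp
next
  case (Suc n)
  obtain c' where c': "adj b c'" "d c' c = n" using step[OF Suc.prems(2)] by blast
  have "\<not> d c' a < m" using Suc.prems(3)[OF c'(1)] c' by auto
  then have ca: "d c' a = Suc m" using adj_d[OF c'(1), of a] Suc.prems(1) d_sym[of a b] by auto
  have "d a c = Suc m + n"
  proof (rule Suc.IH)
    show "d a c' = Suc m" using ca d_sym by simp
    show "d c' c = n" by fact
    fix w assume w: "adj c' w" "d w a < Suc m" "d w c < n"
    have "adj c' b" using c'(1) adj_sym by simp
    moreover have "d b a < d c' a" using ca Suc.prems(1) d_sym[of a b] by simp
    ultimately have "w = b" using uniq'[OF w(1), of b a] w(2) ca by simp
    then show False using w(3) Suc.prems(2) by simp
  qed
  then show ?case by simp
qed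

lemma geo_unique:
  assumes "d a z + d z b = d a b" "d a z' + d z' b = d a b" "d a z = d a z'"
  shows "z = z'"
  using assms
proof (induction "d a z" arbitrary: a)
  case 0
  then show ?case by simp
next
  case (Suc k)
  have near: "\<exists>w. adj a w \<and> d w y = k \<and> d w b < d a b \<and> d w y + d y b = d w b"
    if y: "d a y = Suc k" "d a y + d y b = d a b" for y
  proof -
    obtain w where w: "adj a w" "d w y = k" using step[OF y(1)] by blast
    have "d w b \<le> d w y + d y b" by (rule d_tri)
    then have "d w b < d a b" using w y by simp
    moreover have "d a b = Suc (d w b)" using closer[OF w(1) calculation] .
    ultimately show ?thesis using w y \<open>d w b \<le> d w y + d y b\<close>
      d_tri[of a b w] by (intro exI[of _ w]) auto
  qed
  obtain w where w: "adj a w" "d w z = k" "d w b < d a b" "d w z + d z b = d w b"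
    using near[of z] Suc by auto
  obtain w' where w': "adj a w'" "d w' z' = k" "d w' b < d a b" "d w' z' + d z' b = d w' b"
    using near[of z'] Suc by auto
  have "w = w'" using uniq'[OF w(1) w'(1) w(3) w'(3)] .
  then show ?case using Suc.hyps(1)[of w] w w' by simp
qed

lemma geo_exist: "i \<le> d a b \<Longrightarrow> \<exists>z. d a z = i \<and> d z b = d a b - i"
proof (induction i arbitrary: a)
  case 0 then show ?case by (intro exI[of _ a]) simp
next
  case (Suc i)
  then obtain n where n: "d a b = Suc n" by (cases "d a b") auto
  obtain w where w: "adj a w" "d w b = n" using step[OF n] by blast
  obtain z where z: "d w z = i" "d z b = n - i" using Suc.IH[of w] Suc.prems w n by auto
  have "d a z \<le> d a w + d w z" "d a b \<le> d a z + d z b" by (rule d_tri)+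
  moreover have "d a w = 1" using d_adj w by simp
  ultimately have "d a z = Suc i" using z n Suc.prems by linarith
  then show ?case using z n by auto
qed

end

context stree
begin

definition line :: "(int \<Rightarrow> 'v) \<Rightarrow> bool" where
  "line l \<longleftrightarrow> (\<forall>m n. d (l m) (l n) = nat \<bar>m - n\<bar>)"

lemma line_d: "line l \<Longrightarrow> d (l m) (l n) = nat \<bar>m - n\<bar>" by (simp add: line_def)

lemma line_inj: "line l \<Longrightarrow> l m = l n \<longleftrightarrow> m = n"
  using line_d[of l m n] by auto

lemma nb_line:
  assumes a: "\<And>n. adj (l n) (l (n + 1))" and nb: "\<And>n. l (n - 1) \<noteq> l (n + 1)"
  shows "line l"
proof -
  have P: "d (l m) (l (m + int k)) = k \<and> d (l m) (l (m + int k + 1)) = Suc k" for m k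
  proof (induction k)
    case 0 then show ?case using d_adj[OF a[of m]] by simp
  next
    case (Suc k)
    let ?x = "l (m + int k + 1)" and ?y = "l (m + int k + 2)" and ?z = "l (m + int k)"
    have "adj ?x ?y" using a[of "m + int k + 1"] by (simp add: add.assoc)
    then have o: "d ?y (l m) = Suc (d ?x (l m)) \<or> d ?x (l m) = Suc (d ?y (l m))" by (rule adj_d)
    have "d ?y (l m) = Suc (Suc k)"
    proof (rule ccontr)
      assume "\<not> ?thesis"
      then have "d ?y (l m) < d ?x (l m)" using o Suc.IH d_sym by auto
      moreover have "d ?z (l m) < d ?x (l m)" using Suc.IH d_sym by auto
      moreover have "adj ?x ?z" using a[of "m + int k"] adj_sym by simp
      ultimately have "?y = ?z" using uniq' \<open>adj ?x ?y\<close> by blast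
      then show False using nb[of "m + int k + 1"] by (simp add: add.assoc)
    qed
    then show ?case using Suc.IH d_sym by (simp add: algebra_simps)
  qed
  show ?thesis unfolding line_def
  proof (intro allI)
    fix m n :: int
    show "d (l m) (l n) = nat \<bar>m - n\<bar>"
    proof (cases "m \<le> n")
      case True
      then obtain k where "n = m + int k" using le_Suc_ex zle_iff_zadd by blast
      then show ?thesis using P[of m k] by simp
    next
      case False
      then obtain k where "m = n + int k" by (metis le_Suc_ex nle_le zle_iff_zadd)
      then show ?thesis using P[of n k] d_sym by simp
    qed
  qed
qed

lemma line_seg:
  assumes l: "line l" and ab: "a \<le> b" and x: "x \<in> segment adj (l a) (l b)"
  shows "\<exists>n. a \<le> n \<and> n \<le> b \<and> x = l n"
proof -
  have x': "d (l a) x + d x (l b) = d (l a) (l b)" using x by (simp add: segment_def)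
  have dab: "d (l a) (l b) = nat (b - a)" using line_d[OF l] ab by simp
  define n where "n = a + int (d (l a) x)"
  have "d (l a) x \<le> nat (b - a)" using x' dab by linarith
  then have "int (d (l a) x) \<le> int (nat (b - a))" by (simp only: of_nat_le_iff)
  then have nb: "n \<le> b" using ab n_def by simp
  have "d (l a) (l n) + d (l n) (l b) = d (l a) (l b)" using line_d[OF l] n_def nb dab by simp
  moreover have "d (l a) (l n) = d (l a) x" using line_d[OF l] n_def by simp
  ultimately have "l n = x" using geo_unique x' by metis
  moreover have "a \<le> n" using n_def by simp
  ultimately show ?thesis using nb by blast
qed

lemma seg_line:
  assumes l: "line l" and "a \<le> n" "n \<le> b"
  shows "l n \<in> segment adj (l a) (l b)"
  using assms line_d[OF l] by (simp add: segment_def)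

lemma line_in_line:
  assumes l: "line l" and l': "line l'" and s: "l a = l' s" and t: "l b = l' t" and ab: "a \<le> b"
  shows "\<exists>c e. (e = 1 \<or> e = -1) \<and> (\<forall>n. a \<le> n \<longrightarrow> n \<le> b \<longrightarrow> l n = l' (c + e * n))"
proof -
  have st: "\<bar>s - t\<bar> = b - a" using line_d[OF l, of a b] line_d[OF l', of s t] s t ab by simp
  define e :: int where "e = (if s \<le> t then 1 else -1)"
  have e: "e = 1 \<or> e = -1" by (simp add: e_def)
  have te: "t - s = e * (b - a)" using st by (auto simp: e_def split: if_splits)
  define c where "c = s - e * a"
  have "l n = l' (c + e * n)" if n: "a \<le> n" "n \<le> b" for n
  proof -
    have "l' (c + e * n) \<in> segment adj (l a) (l b)"
      unfolding segment_def s t using line_d[OF l'] n te e c_def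
      by (auto simp: algebra_simps)
    then have "d (l a) (l' (c + e * n)) + d (l' (c + e * n)) (l b) = d (l a) (l b)"
      by (simp add: segment_def)
    moreover have "d (l a) (l n) + d (l n) (l b) = d (l a) (l b)"
      using seg_line[OF l n] by (simp add: segment_def)
    moreover have "d (l a) (l' (c + e * n)) = nat (n - a)"
      unfolding s using line_d[OF l'] n e c_def
      by (auto simp: algebra_simps)
    moreover have "d (l a) (l n) = nat (n - a)" using line_d[OF l] n by simp
    ultimately show ?thesis using geo_unique by metis
  qed
  then show ?thesis using e by blast
qed

lemma int_isom_surj:
  fixes sg :: "int \<Rightarrow> int"
  assumes iso: "\<And>m n. \<bar>sg m - sg n\<bar> = \<bar>m - n\<bar>"
  shows "\<exists>n. sg n = y"
proof -
  define e where "e = sg 1 - sg 0"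
  have e: "\<bar>e\<bar> = 1" using iso[of 1 0] e_def by simp
  have lin: "sg n = sg 0 + e * n" for n
  proof -
    have "\<bar>sg n - sg 0\<bar> = \<bar>n\<bar>" "\<bar>sg n - sg 1\<bar> = \<bar>n - 1\<bar>" using iso by simp_all
    moreover have "e = 1 \<or> e = -1" using e by arith
    moreover have "\<bar>x\<bar> = \<bar>n\<bar> \<Longrightarrow> \<bar>x - 1\<bar> = \<bar>n - 1\<bar> \<Longrightarrow> x = (n::int)" for x by arith
    moreover have "\<bar>x\<bar> = \<bar>n\<bar> \<Longrightarrow> \<bar>x + 1\<bar> = \<bar>n - 1\<bar> \<Longrightarrow> x = - (n::int)" for x by arith
    ultimately show ?thesis
    proof (elim disjE conjE)
      assume h: "\<bar>sg n - sg 0\<bar> = \<bar>n\<bar>" "\<bar>sg n - sg 1\<bar> = \<bar>n - 1\<bar>" "e = 1"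
        and r: "\<And>x. \<bar>x\<bar> = \<bar>n\<bar> \<Longrightarrow> \<bar>x - 1\<bar> = \<bar>n - 1\<bar> \<Longrightarrow> x = n"
      have "sg n - sg 1 = (sg n - sg 0) - 1" using h(3) e_def by simp
      then have "sg n - sg 0 = n" using r[of "sg n - sg 0"] h by simp
      then show ?thesis using h(3) by simp
    next
      assume h: "\<bar>sg n - sg 0\<bar> = \<bar>n\<bar>" "\<bar>sg n - sg 1\<bar> = \<bar>n - 1\<bar>" "e = -1"
        and r: "\<And>x. \<bar>x\<bar> = \<bar>n\<bar> \<Longrightarrow> \<bar>x + 1\<bar> = \<bar>n - 1\<bar> \<Longrightarrow> x = - n"
      have "sg n - sg 1 = (sg n - sg 0) + 1" using h(3) e_def by simp
      then have "sg n - sg 0 = - n" using r[of "sg n - sg 0"] h by simp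
      then show ?thesis using h(3) by simp
    qed
  qed
  have "e = 1 \<or> e = -1" using e by arith
  then have ee: "e * e = 1" by auto
  have "sg (e * (y - sg 0)) = sg 0 + e * (e * (y - sg 0))" by (rule lin)
  also have "\<dots> = y" by (simp add: mult.assoc[symmetric] ee)
  finally have "sg (e * (y - sg 0)) = y" .
  then show ?thesis by blast
qed

lemma line_self:
  assumes l: "line l" and iso: "\<And>x y. d (f x) (f y) = d x y" and sub: "f ` range l \<subseteq> range l"
  shows "f ` range l = range l"
proof -
  have "\<forall>n. \<exists>m. f (l n) = l m" using sub by blast
  then obtain sg where sg: "\<And>n. f (l n) = l (sg n)" by (metis (no_types))
  have "\<bar>sg m - sg n\<bar> = \<bar>m - n\<bar>" for m n
  proof -
    have "nat \<bar>sg m - sg n\<bar> = nat \<bar>m - n\<bar>"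
      using line_d[OF l, of "sg m" "sg n"] line_d[OF l, of m n] iso[of "l m" "l n"] sg by simp
    then show ?thesis by (simp add: eq_nat_nat_iff)
  qed
  then have "\<exists>n. sg n = y" for y using int_isom_surj by blast
  have "range l \<subseteq> f ` range l"
  proof
    fix x assume "x \<in> range l"
    then obtain y where y: "x = l y" by blast
    obtain n where "sg n = y" using \<open>\<And>y. \<exists>n. sg n = y\<close> by blast
    then have "x = f (l n)" using sg y by simp
    then show "x \<in> f ` range l" by blast
  qed
  then show ?thesis using sub by blast
qed

lemma seg_small:
  assumes l: "line l" and sub: "l ` {a..b} \<subseteq> S" and ab: "a \<le> b"
  shows "seglen S \<ge> ereal (real_of_int (b - a))"
proof (cases "finite S")
  case False then show ?thesis by (simp add: seglen_def) (use ab in auto)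
next
  case True
  have inj: "inj_on l {a..b}" using line_inj[OF l] by (auto simp: inj_on_def)
  have "card (l ` {a..b}) \<le> card S" using card_mono[OF True sub] .
  moreover have "card (l ` {a..b}) = nat (b - a + 1)" using card_image[OF inj] by simp
  moreover have "S \<noteq> {}" using sub ab by auto
  ultimately show ?thesis using True ab by (simp add: seglen_def)
qed

lemma seg_big:
  assumes l: "line l" and sub: "S \<subseteq> range l" and big: "seglen S > ereal X" and X: "X \<ge> 0"
  shows "\<exists>a b. a \<le> b \<and> l a \<in> S \<and> l b \<in> S \<and> real_of_int (b - a) > X"
proof -
  define K where "K = {n. l n \<in> S}"
  have SK: "S = l ` K" using sub K_def by auto
  have inj: "inj_on l K" using line_inj[OF l] by (auto simp: inj_on_def)
  have Sne: "S \<noteq> {}" using big X by (auto simp: seglen_def)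
  show ?thesis
  proof (cases "finite S")
    case True
    then have fK: "finite K" using SK inj finite_image_iff by blast
    have Kne: "K \<noteq> {}" using Sne SK by auto
    have cK: "card K = card S" using SK card_image[OF inj] by simp
    define a where "a = Min K"
    define b where "b = Max K"
    have aK: "a \<in> K" and bK: "b \<in> K" using fK Kne a_def b_def by auto
    have "K \<subseteq> {a..b}" using fK Kne a_def b_def by auto
    then have "card K \<le> card {a..b}" by (rule card_mono[rotated]) simp
    then have "int (card K) \<le> int (nat (b - a + 1))" by (simp only: of_nat_le_iff card_atLeastAtMost_int)
    moreover have "a \<le> b" using aK bK fK a_def b_def by auto
    ultimately have "int (card K) \<le> b - a + 1" by simp
    moreover have "ereal (real (card S - 1)) > ereal X" using big True Sne by (simp add: seglen_def)
    ultimately have i1: "int (card S) \<le> b - a + 1" and i2: "real (card S - 1) > X" using cK by simp_all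
    have c1: "card S \<ge> 1" using cK Kne fK card_gt_0_iff by (metis One_nat_def Suc_leI)
    have "real_of_int (int (card S)) \<le> real_of_int (b - a + 1)" using i1 by (simp only: of_int_le_iff)
    then have "real (card S) \<le> real_of_int b - real_of_int a + 1" by simp
    moreover have "real (card S - 1) = real (card S) - 1" using c1 by (simp add: of_nat_diff)
    ultimately have "real_of_int (b - a) > X" using i2 by simp
    moreover have "a \<le> b" using aK bK fK a_def b_def by auto
    ultimately show ?thesis using aK bK K_def by blast
  next
    case False
    then have iK: "infinite K" using SK by auto
    obtain a where aK: "a \<in> K" using Sne SK by auto
    define M where "M = \<lceil>X\<rceil> + 1"
    have "\<not> K \<subseteq> {a - M..a + M}" using iK finite_subset by blast
    then obtain b where bK: "b \<in> K" and bo: "b < a - M \<or> b > a + M"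
      by (metis atLeastAtMost_iff not_less subsetI)
    have "real_of_int M > X" using M_def by linarith
    then show ?thesis
    proof (cases "b < a - M")
      case True
      then have "real_of_int (a - b) > X" using \<open>real_of_int M > X\<close> by linarith
      moreover have "b \<le> a" using True \<open>real_of_int M > X\<close> M_def X by linarith
      ultimately have "b \<le> a \<and> l b \<in> S \<and> l a \<in> S \<and> X < real_of_int (a - b)" using aK bK K_def by auto
      then show ?thesis by blast
    next
      case False
      then have "real_of_int (b - a) > X" using bo \<open>real_of_int M > X\<close> by linarith
      moreover have "a \<le> b" using False bo \<open>real_of_int M > X\<close> M_def X by linarith
      ultimately have "a \<le> b \<and> l a \<in> S \<and> l b \<in> S \<and> X < real_of_int (b - a)" using aK bK K_def by auto
      then show ?thesis by blast
    qed
  qed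
qed

end

lemma walk_map: "(\<And>u v. adj u v \<Longrightarrow> adj (f u) (f v)) \<Longrightarrow> walk adj xs \<Longrightarrow> walk adj (map f xs)"
  by (auto simp: walk_def)

locale tact =
  fixes G :: "('g, 'b) monoid_scheme" and phi :: "'g \<Rightarrow> 'v \<Rightarrow> 'v" and adj :: "'v \<Rightarrow> 'v \<Rightarrow> bool"
  assumes ta: "tree_action G phi adj"
begin

sublocale stree adj using ta by (unfold_locales) (simp add: tree_action_def)

lemma ga: "group_action G UNIV phi" using ta by (simp add: tree_action_def)
lemma grp: "group G" using ga by (simp add: group_action_def group_hom_def)
lemma adjp: "g \<in> carrier G \<Longrightarrow> adj (phi g u) (phi g v) \<longleftrightarrow> adj u v" using ta by (simp add: tree_action_def)

lemma comp: "g \<in> carrier G \<Longrightarrow> k \<in> carrier G \<Longrightarrow> phi (g \<otimes>\<^bsub>G\<^esub> k) x = phi g (phi k x)"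
  using group_action.composition_rule[OF ga] by simp

lemma invl: "g \<in> carrier G \<Longrightarrow> phi (inv\<^bsub>G\<^esub> g) (phi g x) = x"
  using group_action.orbit_sym_aux[OF ga] by simp

lemma invr: "g \<in> carrier G \<Longrightarrow> phi g (phi (inv\<^bsub>G\<^esub> g) x) = x"
  using invl[of "inv\<^bsub>G\<^esub> g" x] group.inv_inv[OF grp] group.inv_closed[OF grp] by simp

lemma one: "phi \<one>\<^bsub>G\<^esub> x = x"
  using group_action.id_eq_one[OF ga] by (metis restrict_apply UNIV_I)

lemma isom_le: "g \<in> carrier G \<Longrightarrow> d (phi g u) (phi g v) \<le> d u v"
proof -
  assume g: "g \<in> carrier G"
  obtain xs where xs: "walk adj xs" "hd xs = u" "last xs = v" "length xs = Suc (d u v)"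
    using geo_ex by blast
  have "walk adj (map (phi g) xs)" using walk_map[of adj "phi g"] adjp[OF g] xs by blast
  moreover have "hd (map (phi g) xs) = phi g u" "last (map (phi g) xs) = phi g v"
    using xs walk_ne[OF xs(1)] by (simp_all add: hd_map last_map)
  ultimately show ?thesis using dist_le xs by fastforce
qed

lemma isom: "g \<in> carrier G \<Longrightarrow> d (phi g u) (phi g v) = d u v"
proof -
  assume g: "g \<in> carrier G"
  have "d (phi (inv\<^bsub>G\<^esub> g) (phi g u)) (phi (inv\<^bsub>G\<^esub> g) (phi g v)) \<le> d (phi g u) (phi g v)"
    using isom_le g group.inv_closed[OF grp] by blast
  then show ?thesis using isom_le[OF g, of u v] invl[OF g] by simp
qed

lemma inj_phi: "g \<in> carrier G \<Longrightarrow> phi g u = phi g v \<longleftrightarrow> u = v"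
  using isom[of g u v] by auto

definition P :: "'g \<Rightarrow> int \<Rightarrow> 'v \<Rightarrow> 'v" where "P g k = phi (g [^]\<^bsub>G\<^esub> k)"

lemma P_closed: "g \<in> carrier G \<Longrightarrow> g [^]\<^bsub>G\<^esub> (k::int) \<in> carrier G"
  using group.int_pow_closed[OF grp] by simp

lemma P_suc: "g \<in> carrier G \<Longrightarrow> P g (k + 1) x = phi g (P g k x)"
proof -
  assume g: "g \<in> carrier G"
  have "g [^]\<^bsub>G\<^esub> (1 + k) = g [^]\<^bsub>G\<^esub> (1::int) \<otimes>\<^bsub>G\<^esub> g [^]\<^bsub>G\<^esub> k"
    using group.int_pow_mult[OF grp g] by blast
  then have "g [^]\<^bsub>G\<^esub> (k + 1) = g \<otimes>\<^bsub>G\<^esub> g [^]\<^bsub>G\<^esub> k"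
    using group.int_pow_1[OF grp g] by (simp add: add.commute)
  then show ?thesis unfolding P_def using comp[OF g P_closed[OF g]] by simp
qed

lemma P_suc': "g \<in> carrier G \<Longrightarrow> P g (k + 1) x = P g k (phi g x)"
proof -
  assume g: "g \<in> carrier G"
  have "g [^]\<^bsub>G\<^esub> (k + 1) = g [^]\<^bsub>G\<^esub> k \<otimes>\<^bsub>G\<^esub> g [^]\<^bsub>G\<^esub> (1::int)"
    using group.int_pow_mult[OF grp g] by blast
  then have "g [^]\<^bsub>G\<^esub> (k + 1) = g [^]\<^bsub>G\<^esub> k \<otimes>\<^bsub>G\<^esub> g"
    using group.int_pow_1[OF grp g] by simp
  then show ?thesis unfolding P_def using comp[OF P_closed[OF g] g] by simp
qed

lemma P_isom: "g \<in> carrier G \<Longrightarrow> d (P g k u) (P g k v) = d u v"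
  unfolding P_def using isom P_closed by blast

lemma P_adj: "g \<in> carrier G \<Longrightarrow> adj (P g k u) (P g k v) \<longleftrightarrow> adj u v"
  unfolding P_def using adjp P_closed by blast

lemma P_inj: "g \<in> carrier G \<Longrightarrow> P g k u = P g k v \<longleftrightarrow> u = v"
  unfolding P_def using inj_phi P_closed by blast

lemma tl_le: "tl adj f \<le> d v (f v)"
  unfolding tl_def by (rule Least_le) blast

lemma tl_ex: "\<exists>v. d v (f v) = tl adj f"
  unfolding tl_def by (rule LeastI_ex) blast

end

locale hyp = tact +
  fixes g
  assumes gc: "g \<in> carrier G" and hy: "hyperbolic adj (phi g)"
begin

definition "tau = tl adj (phi g)"
definition "x0 = (SOME x. d x (phi g x) = tau)"
definition "pp (i::nat) = (SOME z. d x0 z = i \<and> d z (phi g x0) = tau - i)"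
definition "L n = P g (n div int tau) (pp (nat (n mod int tau)))"

lemma x0: "d x0 (phi g x0) = tau"
  unfolding x0_def tau_def by (rule someI_ex) (rule tl_ex)

lemma tau_pos: "tau \<ge> 1"
proof (rule ccontr)
  assume "\<not> tau \<ge> 1"
  then have "d x0 (phi g x0) = 0" using x0 by simp
  then have "phi g x0 = x0" using d_zero by metis
  then show False using hy by (simp add: hyperbolic_def)
qed

lemma fiso: "d (phi g u) (phi g v) = d u v" using isom[OF gc] .

lemma pp_d: "i \<le> tau \<Longrightarrow> d x0 (pp i) = i \<and> d (pp i) (phi g x0) = tau - i"
  unfolding pp_def by (rule someI_ex) (use geo_exist[of i x0 "phi g x0"] x0 in auto)

lemma pp0: "pp 0 = x0" using pp_d[of 0] by simp

lemma pptau: "pp tau = phi g x0" using pp_d[of tau] by simp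

lemma pp_adj: assumes i: "i < tau" shows "adj (pp i) (pp (Suc i))"
proof -
  have "d (pp i) (phi g x0) = Suc (tau - Suc i)" using pp_d[of i] i by simp
  then obtain w where w: "adj (pp i) w" "d w (phi g x0) = tau - Suc i" using step by blast
  have "d x0 w \<le> d x0 (pp i) + d (pp i) w" by (rule d_tri)
  moreover have "d x0 (phi g x0) \<le> d x0 w + d w (phi g x0)" by (rule d_tri)
  moreover have "d (pp i) w = 1" using d_adj w by simp
  ultimately have dw: "d x0 w = Suc i" using pp_d[of i] i w x0 by simp
  have "w = pp (Suc i)"
    by (rule geo_unique[of x0 w "phi g x0"]) (use pp_d[of "Suc i"] i w dw x0 in auto)
  then show ?thesis using w by simp
qed

lemma pp_le: "i + k \<le> tau \<Longrightarrow> d (pp i) (pp (i + k)) \<le> k"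
proof (induction k)
  case 0 then show ?case by simp
next
  case (Suc k)
  have "d (pp i) (pp (i + Suc k)) \<le> d (pp i) (pp (i + k)) + d (pp (i + k)) (pp (Suc (i + k)))"
    using d_tri by simp
  moreover have "d (pp (i + k)) (pp (Suc (i + k))) = 1" using pp_adj[of "i + k"] Suc.prems d_adj by simp
  ultimately show ?case using Suc by simp
qed

lemma L_eq: assumes r: "0 \<le> r" "r \<le> int tau" shows "L (k * int tau + r) = P g k (pp (nat r))"
proof (cases "r = int tau")
  case False
  then have "r < int tau" using r by simp
  then show ?thesis unfolding L_def using r by (simp add: div_pos_pos_trivial)
next
  case True
  have "k * int tau + r = (k + 1) * int tau + 0" using True by (simp add: algebra_simps)
  then have "L (k * int tau + r) = P g (k + 1) (pp 0)" unfolding L_def using tau_pos by simp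
  also have "\<dots> = P g k (pp tau)" using P_suc'[OF gc] pp0 pptau by simp
  finally show ?thesis using True by simp
qed

lemma L_dec: "L n = P g (n div int tau) (pp (nat (n mod int tau)))" by (simp add: L_def)

lemma modp: "0 \<le> n mod int tau" "n mod int tau < int tau" "n = n div int tau * int tau + n mod int tau"
  using tau_pos by simp_all

lemma L_shift: "L (n + int tau) = phi g (L n)"
proof -
  define k where "k = n div int tau"
  define r where "r = n mod int tau"
  have n: "n = k * int tau + r" using modp k_def r_def by simp
  have r: "0 \<le> r" "r \<le> int tau" using modp[of n] r_def by simp_all
  have "n + int tau = (k + 1) * int tau + r" using n by (simp add: algebra_simps)
  then have "L (n + int tau) = P g (k + 1) (pp (nat r))" using L_eq[OF r] by simp
  also have "\<dots> = phi g (P g k (pp (nat r)))" using P_suc[OF gc] by simp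
  also have "\<dots> = phi g (L n)" using L_eq[OF r, of k] n by simp
  finally show ?thesis .
qed

lemma L_adj: "adj (L n) (L (n + 1))"
proof -
  define k where "k = n div int tau"
  define r where "r = n mod int tau"
  have n: "n = k * int tau + r" using modp k_def r_def by simp
  have r: "0 \<le> r" "r < int tau" using modp[of n] r_def by simp_all
  have "L (n + 1) = P g k (pp (nat (r + 1)))" using L_eq[of "r + 1" k] r n by (simp add: add.assoc)
  moreover have "L n = P g k (pp (nat r))" using L_eq[of r k] r n by simp
  moreover have "nat (r + 1) = Suc (nat r)" using r by simp
  moreover have "adj (pp (nat r)) (pp (Suc (nat r)))" using pp_adj r by simp
  ultimately show ?thesis using P_adj[OF gc] by simp
qed

lemma key_nb: "pp (tau - 1) \<noteq> phi g (pp 1)"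
proof
  assume e: "pp (tau - 1) = phi g (pp 1)"
  show False
  proof (cases "tau = 1")
    case True
    then have "x0 = phi g (phi g x0)" using e pp0 pptau by simp
    moreover have "adj x0 (phi g x0)" using d_one x0 True by simp
    ultimately have "\<exists>u v. adj u v \<and> phi g u = v \<and> phi g v = u" by metis
    then show False using hy unfolding hyperbolic_def by blast
  next
    case False
    then have t2: "tau \<ge> 2" using tau_pos by simp
    have "d (pp 1) (pp (1 + (tau - 2))) \<le> tau - 2" using pp_le[of 1 "tau - 2"] t2 by simp
    moreover have "1 + (tau - 2) = tau - 1" using t2 by simp
    ultimately have "d (pp 1) (phi g (pp 1)) \<le> tau - 2" using e by simp
    moreover have "tau \<le> d (pp 1) (phi g (pp 1))" unfolding tau_def by (rule tl_le)
    ultimately show False using t2 by simp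
  qed
qed

lemma L_nb: "L (n - 1) \<noteq> L (n + 1)"
proof -
  define k where "k = n div int tau"
  define r where "r = n mod int tau"
  have n: "n = k * int tau + r" using modp k_def r_def by simp
  have r: "0 \<le> r" "r < int tau" using modp[of n] r_def by simp_all
  have Lp: "L (n + 1) = P g k (pp (nat (r + 1)))" using L_eq[of "r + 1" k] r n by (simp add: add.assoc)
  show ?thesis
  proof (cases "r \<ge> 1")
    case True
    have nm: "n - 1 = k * int tau + (r - 1)" using n by simp
    have "L (k * int tau + (r - 1)) = P g k (pp (nat (r - 1)))" by (rule L_eq) (use r True in auto)
    then have "L (n - 1) = P g k (pp (nat (r - 1)))" by (simp only: nm)
    moreover have "pp (nat (r - 1)) \<noteq> pp (nat (r + 1))"
    proof
      assume e: "pp (nat (r - 1)) = pp (nat (r + 1))"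
      have b1: "nat (r - 1) \<le> tau" "nat (r + 1) \<le> tau" using r by auto
      have "d x0 (pp (nat (r - 1))) = nat (r - 1)" using pp_d[OF b1(1)] by simp
      moreover have "d x0 (pp (nat (r + 1))) = nat (r + 1)" using pp_d[OF b1(2)] by simp
      ultimately have "nat (r - 1) = nat (r + 1)" using e by simp
      then show False using True by simp
    qed
    ultimately show ?thesis using Lp P_inj[OF gc] by simp
  next
    case False
    then have r0: "r = 0" using r by simp
    have nm: "n - 1 = (k - 1) * int tau + (int tau - 1)" using n r0 by (simp add: algebra_simps)
    have "L ((k - 1) * int tau + (int tau - 1)) = P g (k - 1) (pp (nat (int tau - 1)))"
      by (rule L_eq) (use tau_pos in auto)
    then have "L (n - 1) = P g (k - 1) (pp (nat (int tau - 1)))" by (simp only: nm)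
    moreover have "nat (int tau - 1) = tau - 1" by simp
    moreover have "L (n + 1) = P g (k - 1) (phi g (pp 1))"
      using Lp r0 P_suc'[OF gc, of "k - 1" "pp 1"] by simp
    ultimately show ?thesis using key_nb P_inj[OF gc] by simp
  qed
qed

lemma L_line: "line L"
  by (rule nb_line) (use L_adj L_nb in auto)

end

context hyp
begin

lemma L_axis: "axis adj (phi g) = range L"
proof
  show "range L \<subseteq> axis adj (phi g)"
  proof
    fix x assume "x \<in> range L"
    then obtain n where x: "x = L n" by blast
    have "d x (phi g x) = d (L n) (L (n + int tau))" using x L_shift by simp
    also have "\<dots> = tau" using line_d[OF L_line] by simp
    finally show "x \<in> axis adj (phi g)" by (simp add: axis_def tau_def)
  qed
next
  show "axis adj (phi g) \<subseteq> range L"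
  proof
    fix y assume "y \<in> axis adj (phi g)"
    then have y: "d y (phi g y) = tau" by (simp add: axis_def tau_def)
    define del where "del = (LEAST m. \<exists>n. d y (L n) = m)"
    have "\<exists>n. d y (L n) = del" unfolding del_def by (rule LeastI_ex) blast
    then obtain k where k: "d y (L k) = del" by blast
    have mn: "del \<le> d y (L n)" for n unfolding del_def by (rule Least_le) blast
    have ld: "d (L m) (L n) = nat \<bar>m - n\<bar>" for m n using line_d[OF L_line] .
    have g1: "d y (L (k + int tau)) = del + tau"
    proof (rule glue[OF k])
      show "d (L k) (L (k + int tau)) = tau" using ld by simp
      fix w assume w: "adj (L k) w" "d w y < del" "d w (L (k + int tau)) < tau"
      have "d (L (k + 1)) (L (k + int tau)) < d (L k) (L (k + int tau))" using ld tau_pos by simp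
      moreover have "d w (L (k + int tau)) < d (L k) (L (k + int tau))" using w ld by simp
      ultimately have "w = L (k + 1)" using uniq'[OF w(1) L_adj[of k]] by blast
      then show False using w(2) mn[of "k + 1"] d_sym by simp
    qed
    have g2: "d y (phi g y) = (del + tau) + del"
    proof (rule glue[OF g1])
      show "d (L (k + int tau)) (phi g y) = del" using L_shift fiso k d_sym by simp
      fix w assume w: "adj (L (k + int tau)) w" "d w y < del + tau" "d w (phi g y) < del"
      have a1: "adj (L (k + int tau)) (L (k + int tau - 1))" using L_adj[of "k + int tau - 1"] adj_sym by simp
      have "d (L (k + int tau - 1)) y \<le> d (L (k + int tau - 1)) (L k) + d (L k) y" by (rule d_tri)
      then have "d (L (k + int tau - 1)) y < d (L (k + int tau)) y"
        using ld[of "k + int tau - 1" k] k d_sym[of y] g1 tau_pos by simp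
      moreover have "d w y < d (L (k + int tau)) y" using w g1 d_sym by simp
      ultimately have "w = L (k + int tau - 1)" using uniq'[OF w(1) a1] by blast
      moreover have "L (k + int tau - 1) = phi g (L (k - 1))" using L_shift[of "k - 1"] by (simp add: algebra_simps)
      ultimately have "d w (phi g y) = d (L (k - 1)) y" using fiso by simp
      then show False using w(3) mn[of "k - 1"] d_sym by simp
    qed
    then have "del = 0" using y by simp
    then show "y \<in> range L" using k by simp
  qed
qed

end

context stree
begin

lemma shift:
  assumes l: "line l" and l': "line l'" and f: "\<And>m. f (l' m) = l' (m + t)"
    and ll: "\<And>n. a \<le> n \<Longrightarrow> n \<le> b \<Longrightarrow> l n = l' (c + e * n)" and e: "e = 1 \<or> e = -1"
    and n: "a \<le> n" "n \<le> b" "a \<le> n + e * t" "n + e * t \<le> b"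
  shows "f (l n) = l (n + e * t)"
proof -
  have "f (l n) = l' (c + e * n + t)" using ll[OF n(1,2)] f by simp
  moreover have "l (n + e * t) = l' (c + e * (n + e * t))" using ll[OF n(3,4)] .
  moreover have "c + e * (n + e * t) = c + e * n + t" using e by (auto simp: algebra_simps)
  ultimately show ?thesis by simp
qed

end

context tact
begin

lemma axis_ex:
  assumes "g \<in> carrier G" "hyperbolic adj (phi g)"
  shows "\<exists>l. line l \<and> (\<forall>n. phi g (l n) = l (n + int (tl adj (phi g)))) \<and>
    axis adj (phi g) = range l \<and> tl adj (phi g) \<ge> 1"
proof -
  interpret H: hyp G phi adj g by (intro hyp.intro hyp_axioms.intro tact_axioms assms)
  have "\<forall>n. phi g (H.L n) = H.L (n + int (tl adj (phi g)))" using H.L_shift unfolding H.tau_def by simp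
  then show ?thesis using H.L_line H.L_axis H.tau_pos unfolding H.tau_def by blast
qed

end

context tact
begin

lemma fs_apply:
  assumes FS: "FS G phi adj h lam" and l: "line l" and A: "axis adj (phi h) = range l"
    and kk: "kk \<in> carrier G" and ab: "a \<le> b"
    and big: "real_of_int (b - a) > lam * real (tl adj (phi h))"
    and fx: "\<And>n. a \<le> n \<Longrightarrow> n \<le> b \<Longrightarrow> phi kk (l n) = l n"
  shows "\<forall>x \<in> axis adj (phi h). phi kk x = x"
proof -
  have "real (d (l a) (l b)) = real_of_int (b - a)" using line_d[OF l, of a b] ab by simp
  then have "real (d (l a) (l b)) > lam * real (tl adj (phi h))" using big by simp
  moreover have "\<forall>x \<in> segment adj (l a) (l b). phi kk x = x"
    using line_seg[OF l ab] fx by blast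
  moreover have "l a \<in> axis adj (phi h)" "l b \<in> axis adj (phi h)" using A by auto
  ultimately show ?thesis using FS kk unfolding FS_def by blast
qed

lemma gcl: "g \<in> carrier G \<Longrightarrow> inv\<^bsub>G\<^esub> g \<in> carrier G" using group.inv_closed[OF grp] by blast
lemma mcl: "g \<in> carrier G \<Longrightarrow> k \<in> carrier G \<Longrightarrow> g \<otimes>\<^bsub>G\<^esub> k \<in> carrier G"
  by (rule monoid.m_closed[OF group.is_monoid[OF grp]])

lemma ws_fs:
  assumes h: "h \<in> carrier G" "hyperbolic adj (phi h)" and lam: "lam > 0"
    and WS: "weakly_stable G phi adj h lam"
  shows "FS G phi adj h lam"
proof -
  obtain l where l: "line l" and sh: "\<forall>n. phi h (l n) = l (n + int (tl adj (phi h)))"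
    and A: "axis adj (phi h) = range l" and tp: "tl adj (phi h) \<ge> 1"
    using axis_ex[OF h] by blast
  let ?t = "tl adj (phi h)"
  have main: "\<forall>x \<in> axis adj (phi h). phi k x = x"
    if k: "k \<in> carrier G" and ab: "a \<le> b" and fs: "\<forall>x \<in> segment adj (l a) (l b). phi k x = x"
      and big: "lam * real ?t < real (d (l a) (l b))" for k a b
  proof -
    have fixn: "phi k (l n) = l n" if "a \<le> n" "n \<le> b" for n using seg_line[OF l that] fs by blast
    have dab: "real (d (l a) (l b)) = real_of_int (b - a)" using line_d[OF l, of a b] ab by simp
    have sub: "l ` {a..b} \<subseteq> axis adj (phi h) \<inter> phi k ` axis adj (phi h)"
    proof
      fix x assume "x \<in> l ` {a..b}"
      then obtain n where n: "a \<le> n" "n \<le> b" "x = l n" by auto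
      then have "x = phi k (l n)" using fixn by simp
      then show "x \<in> axis adj (phi h) \<inter> phi k ` axis adj (phi h)" using A n by auto
    qed
    have "seglen (axis adj (phi h) \<inter> phi k ` axis adj (phi h)) \<ge> ereal (real_of_int (b - a))"
      using seg_small[OF l sub ab] .
    moreover have "ereal (lam * real ?t) < ereal (real_of_int (b - a))" using big dab by simp
    ultimately have "seglen (axis adj (phi h) \<inter> phi k ` axis adj (phi h)) > ereal (lam * real ?t)"
      by (meson less_le_trans)
    then have "k \<in> Eh G phi adj h" using WS k unfolding weakly_stable_def by blast
    then have kA: "phi k ` axis adj (phi h) = axis adj (phi h)" by (simp add: Eh_def)
    have "lam * real ?t > 0" using lam tp by simp
    then have "a \<noteq> b" using big by auto
    then have aneb: "a < b" using ab by simp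
    show ?thesis
    proof
      fix x assume "x \<in> axis adj (phi h)"
      then obtain n where x: "x = l n" using A by auto
      have "phi k (l n) \<in> range l" using kA A x by blast
      then obtain m where m: "phi k (l n) = l m" by auto
      have "nat \<bar>m - a\<bar> = nat \<bar>n - a\<bar>"
        using isom[OF k, of "l n" "l a"] fixn[of a] ab m line_d[OF l] by simp
      moreover have "nat \<bar>m - b\<bar> = nat \<bar>n - b\<bar>"
        using isom[OF k, of "l n" "l b"] fixn[of b] ab m line_d[OF l] by simp
      ultimately have "\<bar>m - a\<bar> = \<bar>n - a\<bar>" "\<bar>m - b\<bar> = \<bar>n - b\<bar>" by (simp_all add: eq_nat_nat_iff)
      then have "m = n" using aneb by (auto simp: abs_if split: if_splits)
      then show "phi k x = x" using m x by simp
    qed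
  qed
  have "\<forall>x \<in> axis adj (phi h). phi k x = x"
    if k: "k \<in> carrier G" and p: "p \<in> axis adj (phi h)" and q: "q \<in> axis adj (phi h)"
      and big: "lam * real ?t < real (d p q)" and fs: "\<forall>x\<in>segment adj p q. phi k x = x" for k p q
  proof -
    obtain a where a: "p = l a" using p A by auto
    obtain b where b: "q = l b" using q A by auto
    have ss: "segment adj p q = segment adj q p" unfolding segment_def using d_sym by (auto simp: add.commute)
    show "\<forall>x \<in> axis adj (phi h). phi k x = x"
    proof (cases "a \<le> b")
      case True then show ?thesis using main[OF k True] fs big a b by simp
    next
      case False then show ?thesis using main[OF k, of b a] fs big a b ss d_sym[of p q] by simp
    qed
  qed
  then show ?thesis unfolding FS_def by blast
qed

lemma arith1:
  assumes "real_of_int (b - a) > (lam + 2) * real t" "lam > 0" "t \<ge> 1" "s \<le> t"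
  shows "a + int s + int t \<le> b \<and> real_of_int (b - (a + int s + int t)) > lam * real t"
proof -
  have "real s \<le> real t" using assms(4) by simp
  then have *: "real_of_int (b - (a + int s + int t)) > lam * real t"
    using assms(1) by (simp add: algebra_simps)
  moreover have "lam * real t > 0" using assms(2,3) by simp
  ultimately have "real_of_int (b - (a + int s + int t)) > 0" by linarith
  then show ?thesis using * by simp
qed

lemma fs_ws:
  assumes h: "h \<in> carrier G" "hyperbolic adj (phi h)" and lam: "lam > 0" and FS: "FS G phi adj h lam"
  shows "weakly_stable G phi adj h (lam + 2)"
proof -
  obtain l where l: "line l" and sh: "\<forall>n. phi h (l n) = l (n + int (tl adj (phi h)))"
    and A: "axis adj (phi h) = range l" and tp: "tl adj (phi h) \<ge> 1"
    using axis_ex[OF h] by blast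
  let ?t = "tl adj (phi h)"
  have "k \<in> Eh G phi adj h"
    if k: "k \<in> carrier G" and big: "seglen (axis adj (phi h) \<inter> phi k ` axis adj (phi h)) > ereal ((lam + 2) * real ?t)" for k
  proof -
    define l' where "l' = (\<lambda>m. phi k (l m))"
    have l': "line l'" unfolding line_def l'_def using isom[OF k] line_d[OF l] by simp
    define h' where "h' = k \<otimes>\<^bsub>G\<^esub> (h \<otimes>\<^bsub>G\<^esub> inv\<^bsub>G\<^esub> k)"
    have h'c: "h' \<in> carrier G" using mcl gcl k h by (simp add: h'_def)
    have h'x: "phi h' y = phi k (phi h (phi (inv\<^bsub>G\<^esub> k) y))" for y
      using comp mcl gcl k h unfolding h'_def by simp
    have h'l: "phi h' (l' m) = l' (m + int ?t)" for m using h'x invl[OF k] sh unfolding l'_def by simp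
    have sub: "axis adj (phi h) \<inter> phi k ` axis adj (phi h) \<subseteq> range l" using A by blast
    have X: "(lam + 2) * real ?t \<ge> 0" using lam by simp
    obtain a b where ab: "a \<le> b" "l a \<in> axis adj (phi h) \<inter> phi k ` axis adj (phi h)"
      "l b \<in> axis adj (phi h) \<inter> phi k ` axis adj (phi h)" "real_of_int (b - a) > (lam + 2) * real ?t"
      using seg_big[OF l sub big X] by blast
    have rl': "phi k ` axis adj (phi h) = range l'" unfolding A l'_def by auto
    obtain s where s: "l a = l' s" using ab(2) rl' by auto
    obtain t where t: "l b = l' t" using ab(3) rl' by auto
    obtain c e where e: "e = 1 \<or> e = -1" and ll: "\<forall>n. a \<le> n \<longrightarrow> n \<le> b \<longrightarrow> l n = l' (c + e * n)"
      using line_in_line[OF l l' s t ab(1)] by blast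
    have shh': "phi h' (l n) = l (n + e * int ?t)"
      if "a \<le> n" "n \<le> b" "a \<le> n + e * int ?t" "n + e * int ?t \<le> b" for n
      using shift[OF l l' h'l _ e that] ll by blast
    have ar: "a + int 0 + int ?t \<le> b \<and> real_of_int (b - (a + int 0 + int ?t)) > lam * real ?t"
      by (rule arith1[OF ab(4) lam tp]) simp
    have allh': "d (l n) (phi h' (l n)) = ?t" for n
    proof (cases "e = 1")
      case True
      define kk where "kk = inv\<^bsub>G\<^esub> h \<otimes>\<^bsub>G\<^esub> h'"
      have kkc: "kk \<in> carrier G" using mcl gcl h h'c by (simp add: kk_def)
      have kkx: "phi kk y = phi (inv\<^bsub>G\<^esub> h) (phi h' y)" for y
        using comp gcl h h'c unfolding kk_def by simp
      have "\<forall>x \<in> axis adj (phi h). phi kk x = x"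
      proof (rule fs_apply[OF FS l A kkc, of a "b - int ?t"])
        show "a \<le> b - int ?t" using ar by simp
        show "real_of_int (b - int ?t - a) > lam * real ?t" using ar by (simp add: algebra_simps)
        fix n assume n: "a \<le> n" "n \<le> b - int ?t"
        then have "phi h' (l n) = l (n + int ?t)" using shh'[of n] True tp by simp
        also have "\<dots> = phi h (l n)" using sh by simp
        finally show "phi kk (l n) = l n" using kkx invl[OF h(1)] by simp
      qed
      then have "phi kk (l n) = l n" using A by auto
      then have "phi h (phi kk (l n)) = phi h (l n)" by simp
      then have "phi h' (l n) = l (n + int ?t)" using kkx invr[OF h(1)] sh by simp
      then show ?thesis using line_d[OF l] by simp
    next
      case False
      then have e1: "e = -1" using e by simp
      define kk where "kk = h \<otimes>\<^bsub>G\<^esub> h'"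
      have kkc: "kk \<in> carrier G" using mcl h h'c by (simp add: kk_def)
      have kkx: "phi kk y = phi h (phi h' y)" for y
        using comp h h'c unfolding kk_def by simp
      have "\<forall>x \<in> axis adj (phi h). phi kk x = x"
      proof (rule fs_apply[OF FS l A kkc, of "a + int ?t" b])
        show "a + int ?t \<le> b" using ar by simp
        show "real_of_int (b - (a + int ?t)) > lam * real ?t" using ar by (simp add: algebra_simps)
        fix n assume n: "a + int ?t \<le> n" "n \<le> b"
        then have "phi h' (l n) = l (n - int ?t)" using shh'[of n] e1 tp by simp
        moreover have "phi h (l (n - int ?t)) = l n" using sh by simp
        ultimately show "phi kk (l n) = l n" using kkx by simp
      qed
      then have "phi kk (l n) = l n" using A by auto
      then have "phi (inv\<^bsub>G\<^esub> h) (phi h (phi h' (l n))) = phi (inv\<^bsub>G\<^esub> h) (l n)" using kkx by simp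
      then have "phi h' (l n) = phi (inv\<^bsub>G\<^esub> h) (l n)" using invl[OF h(1)] by simp
      moreover have "phi (inv\<^bsub>G\<^esub> h) (l n) = l (n - int ?t)"
        using invl[OF h(1), of "l (n - int ?t)"] sh by simp
      ultimately show ?thesis using line_d[OF l] by simp
    qed
    have "phi (inv\<^bsub>G\<^esub> k) ` range l \<subseteq> range l"
    proof
      fix z assume "z \<in> phi (inv\<^bsub>G\<^esub> k) ` range l"
      then obtain n where z: "z = phi (inv\<^bsub>G\<^esub> k) (l n)" by auto
      have "phi h z = phi (inv\<^bsub>G\<^esub> k) (phi h' (l n))" using h'x invl[OF k] z by simp
      then have "d z (phi h z) = d (l n) (phi h' (l n))" using isom[OF gcl[OF k]] z by simp
      then have "z \<in> axis adj (phi h)" using allh' by (simp add: axis_def)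
      then show "z \<in> range l" using A by simp
    qed
    then have "phi (inv\<^bsub>G\<^esub> k) ` range l = range l"
      by (rule line_self[OF l isom[OF gcl[OF k]]])
    then have "phi k ` range l = phi k ` phi (inv\<^bsub>G\<^esub> k) ` range l" by simp
    also have "\<dots> = range l" using invr[OF k] by (auto simp: image_comp)
    finally show ?thesis using k A by (simp add: Eh_def)
  qed
  then show ?thesis unfolding weakly_stable_def by blast
qed

lemma fs_ai:
  assumes h: "h \<in> carrier G" "hyperbolic adj (phi h)" and lam: "lam > 0" and FS: "FS G phi adj h lam"
  shows "AI G phi adj h (lam + 2)"
proof -
  obtain l where l: "line l" and sh: "\<forall>n. phi h (l n) = l (n + int (tl adj (phi h)))"
    and A: "axis adj (phi h) = range l" and tp: "tl adj (phi h) \<ge> 1"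
    using axis_ex[OF h] by blast
  let ?t = "tl adj (phi h)"
  have "k \<in> Eh G phi adj h"
    if k: "k \<in> carrier G" and hk: "hyperbolic adj (phi k)" and tk: "tl adj (phi k) \<le> ?t"
      and big: "seglen (axis adj (phi k) \<inter> axis adj (phi h)) > ereal ((lam + 2) * real ?t)" for k
  proof -
    obtain lk where lk: "line lk" and shk: "\<And>n. phi k (lk n) = lk (n + int (tl adj (phi k)))"
      and Ak: "axis adj (phi k) = range lk"
      using axis_ex[OF k hk] by blast
    let ?s = "tl adj (phi k)"
    have sub: "axis adj (phi k) \<inter> axis adj (phi h) \<subseteq> range l" using A by blast
    have X: "(lam + 2) * real ?t \<ge> 0" using lam by simp
    obtain a b where ab: "a \<le> b" "l a \<in> axis adj (phi k) \<inter> axis adj (phi h)"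
      "l b \<in> axis adj (phi k) \<inter> axis adj (phi h)" "real_of_int (b - a) > (lam + 2) * real ?t"
      using seg_big[OF l sub big X] by blast
    obtain s where s: "l a = lk s" using ab(2) Ak by auto
    obtain t where t: "l b = lk t" using ab(3) Ak by auto
    obtain c e where e: "e = 1 \<or> e = -1" and ll: "\<forall>n. a \<le> n \<longrightarrow> n \<le> b \<longrightarrow> l n = lk (c + e * n)"
      using line_in_line[OF l lk s t ab(1)] by blast
    have shk': "phi k (l n) = l (n + e * int ?s)"
      if "a \<le> n" "n \<le> b" "a \<le> n + e * int ?s" "n + e * int ?s \<le> b" for n
      using shift[OF l lk shk _ e that] ll by blast
    have ar: "a + int ?s + int ?t \<le> b \<and> real_of_int (b - (a + int ?s + int ?t)) > lam * real ?t"
      by (rule arith1[OF ab(4) lam tp tk])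
    define cc where "cc = inv\<^bsub>G\<^esub> k \<otimes>\<^bsub>G\<^esub> (inv\<^bsub>G\<^esub> h \<otimes>\<^bsub>G\<^esub> (k \<otimes>\<^bsub>G\<^esub> h))"
    have ccc: "cc \<in> carrier G" using mcl gcl h k by (simp add: cc_def)
    have ccx: "phi cc y = phi (inv\<^bsub>G\<^esub> k) (phi (inv\<^bsub>G\<^esub> h) (phi k (phi h y)))" for y
      using comp mcl gcl k h unfolding cc_def by simp
    have ih: "phi (inv\<^bsub>G\<^esub> h) (l (m + int ?t)) = l m" for m using invl[OF h(1), of "l m"] sh by simp
    have fxs: "\<forall>x \<in> axis adj (phi h). phi cc x = x"
    proof (cases "e = 1")
      case True
      show ?thesis
      proof (rule fs_apply[OF FS l A ccc, of a "b - int ?t - int ?s"])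
        show "a \<le> b - int ?t - int ?s" using ar by simp
        show "real_of_int (b - int ?t - int ?s - a) > lam * real ?t" using ar by (simp add: algebra_simps)
        fix n assume n: "a \<le> n" "n \<le> b - int ?t - int ?s"
        have 1: "phi h (l n) = l (n + int ?t)" using sh by simp
        have 2: "phi k (l (n + int ?t)) = l (n + int ?s + int ?t)"
          using shk'[of "n + int ?t"] n True by (simp add: algebra_simps)
        have 3: "phi (inv\<^bsub>G\<^esub> h) (l (n + int ?s + int ?t)) = l (n + int ?s)" using ih by simp
        have "phi k (l n) = l (n + int ?s)" using shk'[of n] n True by simp
        then have 4: "phi (inv\<^bsub>G\<^esub> k) (l (n + int ?s)) = l n" using invl[OF k, of "l n"] by simp
        show "phi cc (l n) = l n" using ccx 1 2 3 4 by simp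
      qed
    next
      case False
      then have e1: "e = -1" using e by simp
      show ?thesis
      proof (rule fs_apply[OF FS l A ccc, of "a + int ?s" "b - int ?t"])
        show "a + int ?s \<le> b - int ?t" using ar by simp
        show "real_of_int (b - int ?t - (a + int ?s)) > lam * real ?t" using ar by (simp add: algebra_simps)
        fix n assume n: "a + int ?s \<le> n" "n \<le> b - int ?t"
        have 1: "phi h (l n) = l (n + int ?t)" using sh by simp
        have 2: "phi k (l (n + int ?t)) = l (n - int ?s + int ?t)"
          using shk'[of "n + int ?t"] n e1 by (simp add: algebra_simps)
        have 3: "phi (inv\<^bsub>G\<^esub> h) (l (n - int ?s + int ?t)) = l (n - int ?s)" using ih by simp
        have "phi k (l n) = l (n - int ?s)" using shk'[of n] n e1 by simp
        then have 4: "phi (inv\<^bsub>G\<^esub> k) (l (n - int ?s)) = l n" using invl[OF k, of "l n"] by simp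
        show "phi cc (l n) = l n" using ccx 1 2 3 4 by simp
      qed
    qed
    have "phi k ` range l \<subseteq> range l"
    proof
      fix z assume "z \<in> phi k ` range l"
      then obtain x where z: "z = phi k x" and x: "x \<in> axis adj (phi h)" using A by auto
      have "phi (inv\<^bsub>G\<^esub> k) (phi (inv\<^bsub>G\<^esub> h) (phi k (phi h x))) = x" using fxs x ccx by simp
      then have "phi (inv\<^bsub>G\<^esub> h) (phi k (phi h x)) = phi k x" using invr[OF k] by metis
      then have comm: "phi k (phi h x) = phi h (phi k x)" using invr[OF h(1)] by metis
      have "d z (phi h z) = d (phi k x) (phi k (phi h x))" using z comm by simp
      also have "\<dots> = d x (phi h x)" using isom[OF k] by simp
      also have "\<dots> = ?t" using x by (simp add: axis_def)
      finally have "z \<in> axis adj (phi h)" by (simp add: axis_def)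
      then show "z \<in> range l" using A by simp
    qed
    then have "phi k ` range l = range l" by (rule line_self[OF l isom[OF k]])
    then show ?thesis using k A by (simp add: Eh_def)
  qed
  then show ?thesis unfolding AI_def using not_le by blast
qed

end

theorem mainTheorem12:
  fixes G :: "('g, 'b) monoid_scheme" and phi :: "'g \<Rightarrow> 'v \<Rightarrow> 'v"
    and adj :: "'v \<Rightarrow> 'v \<Rightarrow> bool" and h :: 'g and lam :: real
  assumes "tree_action G phi adj" and "h \<in> carrier G" and "hyperbolic adj (phi h)"
    and "lam > 0"
  shows "(FS G phi adj h lam \<longrightarrow> AI G phi adj h (lam + 2) \<and> weakly_stable G phi adj h (lam + 2))
       \<and> (weakly_stable G phi adj h lam \<longrightarrow> FS G phi adj h lam)"
proof -
  interpret tact G phi adj by (rule tact.intro) (rule assms(1))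
  show ?thesis using fs_ai fs_ws ws_fs assms(2-4) by blast
qed

end
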